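(* Let $\kappa$ be a regular uncountable cardinal. There exist a pleasant ideal $J$ on $\kappa$ and a set $A\in J^+$ such that $J\restriction A$ is not pleasant.
   Context: An ideal on $\kappa$ is a family of subsets of $\kappa$ closed under subsets and finite unions, which is $<\kappa$-complete and contains all singletons. $J^+=\{X\subseteq\kappa: X\notin J\}$, and for $A\in J^+$, $J\restriction A=\{X\subseteq\kappa: X\cap A\in J\}$. For $A\subseteq\kappa$ and $X_\alpha\subseteq\kappa$, $\bigtriangledown_{\alpha\in A}X_\alpha=\{\xi<\kappa:\exists\alpha<\xi\,(\alpha\in A\wedge \xi\in X_\alpha)\}$. An ideal $J$ is pleasant if whenever $A\in J$ and $X_\alpha\in J$ for all $\alpha$, then $\bigtriangledown_{\alpha\in A}X_\alpha\in J$. *)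

theory Defs
  imports Main "HOL-Library.Countable_Set"
begin

unbundle cardinal_syntax

text \<open>The cardinal kappa is represented by a cardinal well-order r on the whole
  type 'a (card_order r), so subsets of kappa are sets of type 'a set and
  alpha < xi means (alpha, xi) in r with alpha different from xi.\<close>

definition is_ideal :: "'a rel \<Rightarrow> 'a set set \<Rightarrow> bool" where
  "is_ideal r J \<longleftrightarrow>
     (\<forall>X Y. X \<in> J \<and> Y \<subseteq> X \<longrightarrow> Y \<in> J) \<and>
     (\<forall>X Y. X \<in> J \<and> Y \<in> J \<longrightarrow> X \<union> Y \<in> J) \<and>
     (\<forall>F. F \<subseteq> J \<and> |F| <o r \<longrightarrow> \<Union>F \<in> J) \<and>
     (\<forall>x. {x} \<in> J)"

definition positive_sets :: "'a set set \<Rightarrow> 'a set set" where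
  "positive_sets J = {X. X \<notin> J}"

definition restrict_ideal :: "'a set set \<Rightarrow> 'a set \<Rightarrow> 'a set set" where
  "restrict_ideal J A = {X. X \<inter> A \<in> J}"

definition diag_union :: "'a rel \<Rightarrow> 'a set \<Rightarrow> ('a \<Rightarrow> 'a set) \<Rightarrow> 'a set" where
  "diag_union r A X = {\<xi>. \<exists>\<alpha>. (\<alpha>, \<xi>) \<in> r \<and> \<alpha> \<noteq> \<xi> \<and> \<alpha> \<in> A \<and> \<xi> \<in> X \<alpha>}"

definition pleasant :: "'a rel \<Rightarrow> 'a set set \<Rightarrow> bool" where
  "pleasant r J \<longleftrightarrow>
     (\<forall>A X. A \<in> J \<and> (\<forall>\<alpha>. X \<alpha> \<in> J) \<longrightarrow> diag_union r A X \<in> J)"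

end

theory Submission
  imports Defs
begin

theorem proposition2p5:
  fixes r :: "'a rel"
  assumes "card_order r"
    and "regularCard r"
    and "uncountable (UNIV :: 'a set)"
  shows "\<exists>J A. is_ideal r J \<and> pleasant r J \<and> A \<in> positive_sets J \<and>
           \<not> pleasant r (restrict_ideal J A)"
proof -
  have wo: "well_order_on UNIV r" using assms(1) card_order_on_well_order_on by blast
  hence F: "Field r = UNIV" using well_order_on_Field by blast
  have Co: "Card_order r" using assms(1) card_order_on_Card_order by blast
  have inf: "infinite (UNIV :: 'a set)" using assms(3) countable_finite by blast
  have Ci: "Cinfinite r" using Co inf F unfolding cinfinite_def by simp
  have iso: "r =o |UNIV :: 'a set|" using assms(1) card_of_unique by blast
  have lin: "\<And>x y. x \<noteq> y \<Longrightarrow> (x,y) \<in> r \<or> (y,x) \<in> r"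
    using wo unfolding well_order_on_def linear_order_on_def total_on_def by blast
  have antis: "\<And>x y. (x,y) \<in> r \<Longrightarrow> (y,x) \<in> r \<Longrightarrow> x = y"
    using wo unfolding well_order_on_def linear_order_on_def partial_order_on_def antisym_def by blast
  have trans: "\<And>x y z. (x,y) \<in> r \<Longrightarrow> (y,z) \<in> r \<Longrightarrow> (x,z) \<in> r"
    using wo unfolding well_order_on_def linear_order_on_def partial_order_on_def
      preorder_on_def trans_def by blast
  define J where "J = {X :: 'a set. |X| <o r}"
  have finJ: "X \<in> J" if "finite X" for X
  proof -
    have "|X| <o |UNIV :: 'a set|" by (meson that inf card_of_Well_order card_of_ordLeq_finite not_ordLeq_iff_ordLess)
    thus ?thesis unfolding J_def using iso ordIso_symmetric ordLess_ordIso_trans by blast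
  qed
  have subJ: "Y \<in> J" if "X \<in> J" "Y \<subseteq> X" for X Y
    using that unfolding J_def using card_of_mono1 ordLeq_ordLess_trans by blast
  have UJ: "(\<Union>i\<in>I. Z i) \<in> J" if "|I| <o r" "\<forall>i\<in>I. Z i \<in> J" for I and Z :: "'b \<Rightarrow> 'a set"
    using card_of_UNION_ordLess_infinite_Field_regularCard[OF assms(2) Ci that(1)] that(2)
    unfolding J_def by blast
  have ideal: "is_ideal r J"
    unfolding is_ideal_def
  proof (intro conjI allI impI)
    fix X Y assume "X \<in> J \<and> Y \<subseteq> X" thus "Y \<in> J" using subJ by blast
  next
    fix X Y assume a: "X \<in> J \<and> Y \<in> J"
    have "(\<Union>i\<in>{X,Y}. id i) \<in> J"
    proof (rule UJ)
      have "|{X,Y}| <o |UNIV :: 'a set|"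
        by (meson inf card_of_Well_order card_of_ordLeq_finite not_ordLeq_iff_ordLess finite.intros)
      thus "|{X,Y}| <o r" using iso ordIso_symmetric ordLess_ordIso_trans by blast
    qed (use a in auto)
    thus "X \<union> Y \<in> J" by simp
  next
    fix Fs assume a: "Fs \<subseteq> J \<and> |Fs| <o r"
    have "(\<Union>i\<in>Fs. id i) \<in> J" by (rule UJ) (use a in auto)
    thus "\<Union>Fs \<in> J" by simp
  next
    fix x show "{x} \<in> J" using finJ by simp
  qed
  have pl: "pleasant r J"
    unfolding pleasant_def
  proof (intro allI impI)
    fix A and X :: "'a \<Rightarrow> 'a set" assume a: "A \<in> J \<and> (\<forall>\<alpha>. X \<alpha> \<in> J)"
    have "(\<Union>i\<in>A. X i) \<in> J" by (rule UJ) (use a in \<open>auto simp: J_def\<close>)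
    moreover have "diag_union r A X \<subseteq> (\<Union>i\<in>A. X i)" unfolding diag_union_def by blast
    ultimately show "diag_union r A X \<in> J" using subJ by blast
  qed
  have "|(UNIV :: 'a set) <+> (UNIV :: 'a set)| =o |UNIV :: 'a set|"
    by (rule card_of_Plus_infinite1[OF inf ordLeq_refl[OF card_of_Card_order]])
  then obtain h where h: "bij_betw h ((UNIV :: 'a set) <+> (UNIV :: 'a set)) (UNIV :: 'a set)"
    using card_of_ordIso by blast
  define A where "A = h ` range Inl"
  define B where "B = h ` range Inr"
  have AB: "A \<inter> B = {}" using h unfolding A_def B_def bij_betw_def inj_on_def by auto
  have big: "X \<notin> J" if "inj_on g UNIV" "X = g ` UNIV" for X and g :: "'a \<Rightarrow> 'a"
  proof
    assume "X \<in> J"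
    have "|UNIV :: 'a set| =o |X|" using that card_of_ordIso bij_betw_def by blast
    hence "|X| =o |UNIV :: 'a set|" by (rule ordIso_symmetric)
    hence "|X| =o r" using ordIso_transitive[OF _ ordIso_symmetric[OF iso]] by blast
    moreover have "|X| <o r" using \<open>X \<in> J\<close> unfolding J_def by blast
    ultimately show False using not_ordLess_ordIso by blast
  qed
  have injA: "inj_on (h \<circ> Inl) UNIV" using h unfolding bij_betw_def inj_on_def by auto
  have injB: "inj_on (h \<circ> Inr) UNIV" using h unfolding bij_betw_def inj_on_def by auto
  have Apos: "A \<notin> J" using big[OF injA] unfolding A_def by (simp add: image_comp)
  have Bpos: "B \<notin> J" using big[OF injB] unfolding B_def by (simp add: image_comp)
  have unb: "\<exists>\<xi>. \<xi> \<in> A \<and> \<alpha> \<noteq> \<xi> \<and> (\<alpha>, \<xi>) \<in> r" for \<alpha>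
  proof (rule ccontr)
    assume "\<not> ?thesis"
    hence "A \<subseteq> underS r \<alpha> \<union> {\<alpha>}" using lin unfolding underS_def by blast
    moreover have "underS r \<alpha> \<in> J" unfolding J_def using card_of_underS[OF Co] F by blast
    moreover have "underS r \<alpha> \<union> {\<alpha>} \<in> J" using ideal calculation(2) finJ
      unfolding is_ideal_def by blast
    ultimately show False using Apos subJ by blast
  qed
  define f where "f \<alpha> = (SOME \<xi>. \<xi> \<in> A \<and> \<alpha> \<noteq> \<xi> \<and> (\<alpha>, \<xi>) \<in> r)" for \<alpha>
  have f: "f \<alpha> \<in> A \<and> \<alpha> \<noteq> f \<alpha> \<and> (\<alpha>, f \<alpha>) \<in> r" for \<alpha>
    unfolding f_def using someI_ex[OF unb] by blast
  have fB: "f ` B \<notin> J"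
  proof
    assume "f ` B \<in> J"
    hence "\<not> |f ` B| =o r" unfolding J_def using not_ordLess_ordIso by blast
    hence "\<not> cofinal (f ` B) r" using assms(2) F unfolding regularCard_def by blast
    then obtain a where a: "\<forall>b\<in>f ` B. a = b \<or> (a,b) \<notin> r" unfolding cofinal_def F by blast
    have "B \<subseteq> underS r a"
    proof
      fix x assume "x \<in> B"
      hence "f x \<in> f ` B" by blast
      hence "a = f x \<or> (a, f x) \<notin> r" using a by blast
      hence "f x = a \<or> (f x, a) \<in> r" using lin[of "f x" a] by blast
      hence fa: "(f x, a) \<in> r" using wo F unfolding well_order_on_def linear_order_on_def
          partial_order_on_def preorder_on_def refl_on_def by blast
      hence "(x, a) \<in> r" using f trans by blast
      moreover have "x \<noteq> a" using fa f antis by blast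
      ultimately show "x \<in> underS r a" unfolding underS_def by blast
    qed
    moreover have "underS r a \<in> J" unfolding J_def using card_of_underS[OF Co] F by blast
    ultimately show False using Bpos subJ by blast
  qed
  have npl: "\<not> pleasant r (restrict_ideal J A)"
  proof
    assume p: "pleasant r (restrict_ideal J A)"
    have "B \<in> restrict_ideal J A" using AB finJ unfolding restrict_ideal_def by (simp add: Int_commute)
    moreover have "\<forall>\<alpha>. {f \<alpha>} \<in> restrict_ideal J A" using finJ unfolding restrict_ideal_def by simp
    ultimately have "diag_union r B (\<lambda>\<alpha>. {f \<alpha>}) \<in> restrict_ideal J A"
      using p[unfolded pleasant_def, rule_format, of B "\<lambda>\<alpha>. {f \<alpha>}"] by blast
    hence "diag_union r B (\<lambda>\<alpha>. {f \<alpha>}) \<inter> A \<in> J" unfolding restrict_ideal_def by simp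
    moreover have "f ` B \<subseteq> diag_union r B (\<lambda>\<alpha>. {f \<alpha>}) \<inter> A"
      using f unfolding diag_union_def by blast
    ultimately show False using fB subJ by blast
  qed
  show ?thesis using ideal pl Apos npl unfolding positive_sets_def by blast
qed

end
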